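(* Let $R=k[[t^6,t^7,t^{15}]]$ and $x=t^6+t^7$. Then $v(m^3+xR)\not\subseteq v(m^3)\cup v(xR)$; more precisely $22\in v(m^3+xR)$ but $22\notin v(m^3)\cup v(xR)$. Consequently the $m$-adic filtration of $R$ is not essentially divisible with respect to the minimal reduction $(t^6+t^7)R$, although it is essentially divisible with respect to $t^6R$.
   Context: $k$ is a field, $R=k[[t^6,t^7,t^{15}]]\subseteq k[[t]]$ with maximal ideal $m$, $v$ the $t$-adic valuation, and for a nonzero ideal $I$, $v(I)=\{v(a):a\in I,a\ne0\}$. For $a\in R$, $\operatorname{ord}(a)=\max\{i: a\in m^i\}$; for $s\in v(R)$, $\operatorname{vord}(s)=\max\{i: s\in v(m^i)\}$. For $x\in R$ with $v(x)=6$ (the multiplicity), the $m$-adic filtration is essentially divisible with respect to $xR$ if for every $u\in v(xR)$ there is $a\in xR$ with $v(a)=u$ and $\operatorname{ord}(a)=\operatorname{vord}(u)$. *)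

theory Defs
  imports "HOL-Computational_Algebra.Formal_Power_Series"
begin

definition Sgp :: "nat set" where
  "Sgp = {6*a + 7*b + 15*c | a b c. True}"

text \<open>R = k[[t^6,t^7,t^15]] inside k[[t]]: the power series supported on the semigroup
  (the closure of the span of the monomials t^s, s in the semigroup).\<close>
definition Rring :: "'a::field fps set" where
  "Rring = {f. \<forall>n. fps_nth f n \<noteq> 0 \<longrightarrow> n \<in> Sgp}"

definition mideal :: "'a::field fps set" where
  "mideal = {f \<in> Rring. fps_nth f 0 = 0}"

inductive_set ideal_prod :: "'a::field fps set \<Rightarrow> 'a fps set \<Rightarrow> 'a fps set"
  for I J where
  zero: "0 \<in> ideal_prod I J"
| prod: "a \<in> I \<Longrightarrow> b \<in> J \<Longrightarrow> a * b \<in> ideal_prod I J"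
| add: "x \<in> ideal_prod I J \<Longrightarrow> y \<in> ideal_prod I J \<Longrightarrow> x + y \<in> ideal_prod I J"

fun mpow :: "nat \<Rightarrow> 'a::field fps set" where
  "mpow 0 = Rring"
| "mpow (Suc i) = ideal_prod mideal (mpow i)"

definition principal :: "'a::field fps \<Rightarrow> 'a fps set" where
  "principal x = {x * r | r. r \<in> Rring}"

definition ideal_sum :: "'a::field fps set \<Rightarrow> 'a fps set \<Rightarrow> 'a fps set" where
  "ideal_sum I J = {a + b | a b. a \<in> I \<and> b \<in> J}"

definition vals :: "'a::field fps set \<Rightarrow> nat set" where
  "vals I = {subdegree a | a. a \<in> I \<and> a \<noteq> 0}"

definition ordm :: "'a::field fps \<Rightarrow> nat" where
  "ordm a = (GREATEST i. a \<in> (mpow i :: 'a fps set))"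

definition vordm :: "'a::field itself \<Rightarrow> nat \<Rightarrow> nat" where
  "vordm _ s = (GREATEST i. s \<in> vals (mpow i :: 'a fps set))"

definition ess_divisible :: "'a::field fps \<Rightarrow> bool" where
  "ess_divisible x = (\<forall>u \<in> vals (principal x).
     \<exists>a \<in> principal x. a \<noteq> 0 \<and> subdegree a = u \<and> ordm a = vordm TYPE('a) u)"

end

theory Submission imports Defs begin

fun T :: "nat \<Rightarrow> nat set" where
  "T 0 = Sgp"
| "T (Suc i) = {a + b | a b. a \<in> Sgp \<and> a \<noteq> 0 \<and> b \<in> T i}"

lemma lin_small: "n = 6*a + 7*b + 15*(c::nat) \<Longrightarrow> n = 0 \<or> n = 6 \<or> n = 7 \<or> n \<ge> 12"
proof -
  assume n: "n = 6*a + 7*b + 15*c"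
  show ?thesis
  proof (cases "c \<ge> 1 \<or> a + b \<ge> 2")
    case True then show ?thesis using n by linarith
  next
    case False
    then have "c = 0" "a + b \<le> 1" by auto
    then have "(a = 0 \<and> b = 0) \<or> (a = 1 \<and> b = 0) \<or> (a = 0 \<and> b = 1)" by linarith
    then show ?thesis using n \<open>c = 0\<close> by auto
  qed
qed

lemma Sgp_small: "n \<in> Sgp \<Longrightarrow> n = 0 \<or> n = 6 \<or> n = 7 \<or> n \<ge> 12"
proof -
  assume "n \<in> Sgp"
  then obtain a b c where "n = 6*a + 7*b + 15*c" unfolding Sgp_def by blast
  then show ?thesis by (rule lin_small)
qed

lemma Sgp_15: "15 \<in> Sgp" unfolding Sgp_def by (rule CollectI, rule exI[of _ 0], rule exI[of _ 0], rule exI[of _ 1]) simp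
lemma Sgp_7: "7 \<in> Sgp" unfolding Sgp_def by (rule CollectI, rule exI[of _ 0], rule exI[of _ 1], rule exI[of _ 0]) simp
lemma Sgp_6: "6 \<in> Sgp" unfolding Sgp_def by (rule CollectI, rule exI[of _ 1], rule exI[of _ 0], rule exI[of _ 0]) simp
lemma Sgp_0: "0 \<in> Sgp" unfolding Sgp_def by auto
lemma Sgp_14: "14 \<in> Sgp" unfolding Sgp_def by (rule CollectI, rule exI[of _ 0], rule exI[of _ 2], rule exI[of _ 0]) simp
lemma lin16: "16 \<noteq> 6*a + 7*b + 15*(c::nat)"
proof
  assume h: "16 = 6*a + 7*b + 15*c"
  then have "c \<le> 1" "a \<le> 2" "b \<le> 2" by linarith+
  then have "c \<in> {0,1}" "a \<in> {0,1,2}" "b \<in> {0,1,2}" by auto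
  then show False using h by auto
qed

lemma Sgp_16: "16 \<notin> Sgp"
proof
  assume "16 \<in> Sgp"
  then obtain a b c where "16 = 6*a + 7*b + 15*(c::nat)" unfolding Sgp_def by blast
  then show False using lin16 by metis
qed
lemma Sgp_add: "a \<in> Sgp \<Longrightarrow> b \<in> Sgp \<Longrightarrow> a + b \<in> Sgp"
proof -
  assume "a \<in> Sgp" "b \<in> Sgp"
  then obtain x y z x' y' z' where "a = 6*x+7*y+15*z" "b = 6*x'+7*y'+15*z'" unfolding Sgp_def by auto
  then show ?thesis unfolding Sgp_def
    by (intro CollectI exI[of _ "x+x'"] exI[of _ "y+y'"] exI[of _ "z+z'"]) (simp add: algebra_simps)
qed

lemma X_R: "n \<in> Sgp \<Longrightarrow> (fps_X ^ n :: 'a::field fps) \<in> Rring"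
  unfolding Rring_def by auto

lemma X_m: "n \<in> Sgp \<Longrightarrow> n \<noteq> 0 \<Longrightarrow> (fps_X ^ n :: 'a::field fps) \<in> mideal"
  unfolding mideal_def by (auto intro: X_R)

lemma X_mpow: "n \<in> T i \<Longrightarrow> (fps_X ^ n :: 'a::field fps) \<in> mpow i"
proof (induction i arbitrary: n)
  case 0 then show ?case by (auto intro: X_R)
next
  case (Suc i)
  then obtain a b where "n = a + b" "a \<in> Sgp" "a \<noteq> 0" "b \<in> T i" by auto
  then have "(fps_X ^ a :: 'a fps) * fps_X ^ b \<in> mpow (Suc i)"
    using Suc.IH by (auto intro!: ideal_prod.prod X_m)
  then show ?case by (simp add: \<open>n = a + b\<close> power_add)
qed

lemma supp_mpow: "(f :: 'a::field fps) \<in> mpow i \<Longrightarrow> fps_nth f n \<noteq> 0 \<Longrightarrow> n \<in> T i"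
proof (induction i arbitrary: f n)
  case 0 then show ?case by (auto simp: Rring_def)
next
  case (Suc i)
  from Suc.prems(1) have "f \<in> ideal_prod mideal (mpow i)" by simp
  then show ?case using Suc.prems(2)
  proof (induction arbitrary: n)
    case zero then show ?case by simp
  next
    case (prod a b)
    from prod.prems obtain k where k: "k \<in> {0..n}" "fps_nth a k * fps_nth b (n - k) \<noteq> 0"
      unfolding fps_mult_nth by (meson sum.neutral)
    then have "fps_nth a k \<noteq> 0" "fps_nth b (n - k) \<noteq> 0" by auto
    with prod.hyps have "k \<in> Sgp" "n - k \<in> T i"
      using Suc.IH unfolding mideal_def Rring_def by auto
    moreover have "k \<noteq> 0" using \<open>fps_nth a k \<noteq> 0\<close> prod.hyps(1) unfolding mideal_def by (cases k) auto
    moreover have "n = k + (n - k)" using k by auto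
    ultimately show ?case by auto
  next
    case (add x y)
    then show ?case by (cases "fps_nth x n = 0") auto
  qed
qed

lemma T_ge: "n \<in> T i \<Longrightarrow> n \<ge> 6 * i"
proof (induction i arbitrary: n)
  case 0 then show ?case by simp
next
  case (Suc i)
  then obtain a b where "n = a + b" "a \<in> Sgp" "a \<noteq> 0" "b \<in> T i" by auto
  have "a \<ge> 6" using Sgp_small[of a] \<open>a \<in> Sgp\<close> \<open>a \<noteq> 0\<close> by linarith
  moreover have "b \<ge> 6 * i" using Suc.IH \<open>b \<in> T i\<close> by blast
  ultimately show ?case using \<open>n = a + b\<close> by simp
qed

lemma T3_22: "22 \<notin> T 3"
proof
  assume "22 \<in> T 3"
  then obtain a1 a2 a3 d where "22 = a1 + (a2 + (a3 + d))" "a1 \<in> Sgp" "a1 \<noteq> 0"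
    "a2 \<in> Sgp" "a2 \<noteq> 0" "a3 \<in> Sgp" "a3 \<noteq> 0" "d \<in> Sgp"
    by (auto simp: numeral_3_eq_3)
  note h = this
  have g: "a \<in> Sgp \<Longrightarrow> a \<noteq> 0 \<Longrightarrow> a \<le> 10 \<Longrightarrow> 6 \<le> a \<and> a \<le> 7" for a
    using Sgp_small[of a] by linarith
  have g6: "a \<in> Sgp \<Longrightarrow> a \<noteq> 0 \<Longrightarrow> 6 \<le> a" for a
    using Sgp_small[of a] by linarith
  have "6 \<le> a1" "6 \<le> a2" "6 \<le> a3" using h g6 by auto
  then have "a1 \<le> 10" "a2 \<le> 10" "a3 \<le> 10" "d \<le> 4" using h(1) by linarith+
  then have "a1 \<le> 7" "a2 \<le> 7" "a3 \<le> 7" "d = 0" using h g Sgp_small[of d] by auto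
  then show False using h(1) by linarith
qed

lemma T_22: "i \<ge> 3 \<Longrightarrow> 22 \<notin> T i"
proof
  assume "3 \<le> i" "22 \<in> T i"
  show False
  proof (cases "i = 3")
    case True then show ?thesis using T3_22 \<open>22 \<in> T i\<close> by simp
  next
    case False then have "6 * i \<ge> 24" using \<open>3 \<le> i\<close> by simp
    then show ?thesis using T_ge[OF \<open>22 \<in> T i\<close>] by simp
  qed
qed

lemma T_step: "a \<in> Sgp \<Longrightarrow> a \<noteq> 0 \<Longrightarrow> b \<in> T i \<Longrightarrow> a + b \<in> T (Suc i)"
  by auto

lemma T_7: "7 \<in> T 1" using T_step[OF Sgp_7 _ , of 0 0] Sgp_0 by simp
lemma T_14: "14 \<in> T 2" using T_step[OF Sgp_7 _ T_7] by (simp add: numeral_2_eq_2)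
lemma T_21: "21 \<in> T 3" using T_step[OF Sgp_7 _ T_14] by (simp add: numeral_3_eq_3 numeral_2_eq_2)

lemma Rring_mult:
  assumes "(a :: 'a::field fps) \<in> Rring" "b \<in> Rring" shows "a * b \<in> Rring"
  unfolding Rring_def
proof (intro CollectI allI impI)
  fix n have a: "\<forall>n. fps_nth a n \<noteq> 0 \<longrightarrow> n \<in> Sgp" and b: "\<forall>n. fps_nth b n \<noteq> 0 \<longrightarrow> n \<in> Sgp"
    using assms unfolding Rring_def by auto
  assume nz: "fps_nth (a * b) n \<noteq> 0"
  from nz obtain k where k: "k \<in> {0..n}" "fps_nth a k * fps_nth b (n - k) \<noteq> 0"
    unfolding fps_mult_nth by (meson sum.neutral)
  then have "k \<in> Sgp" "n - k \<in> Sgp" using a b by auto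
  then have "k + (n - k) \<in> Sgp" by (rule Sgp_add)
  then show "n \<in> Sgp" using k by simp
qed

lemma sub_Sgp:
  assumes "(r :: 'a::field fps) \<in> Rring" "r \<noteq> 0" shows "subdegree r \<in> Sgp"
proof -
  have "fps_nth r (subdegree r) \<noteq> 0" using assms(2) by simp
  moreover have "\<forall>n. fps_nth r n \<noteq> 0 \<longrightarrow> n \<in> Sgp" using assms(1) unfolding Rring_def by simp
  ultimately show ?thesis by blast
qed

lemma sub_x:
  fixes r :: "'a::field fps"
  assumes "r \<noteq> 0"
  shows "subdegree ((fps_X ^ 6 + fps_X ^ 7) * r) = 6 + subdegree r"
proof -
  have "subdegree (fps_X ^ 6 + fps_X ^ 7 :: 'a fps) = 6"
    by (rule subdegreeI) auto
  moreover have "(fps_X ^ 6 + fps_X ^ 7 :: 'a fps) \<noteq> 0"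
  proof
    assume "(fps_X ^ 6 + fps_X ^ 7 :: 'a fps) = 0"
    then have "fps_nth (fps_X ^ 6 + fps_X ^ 7 :: 'a fps) 6 = 0" by simp
    then show False by simp
  qed
  ultimately show ?thesis using assms by simp
qed

lemma x_nth22:
  fixes r :: "'a::field fps"
  shows "fps_nth ((fps_X ^ 6 + fps_X ^ 7) * r) 22 = fps_nth r 16 + fps_nth r 15"
  by (simp add: distrib_right fps_X_power_mult_nth)

theorem mainTheorem10:
  fixes x :: "'a::field fps"
  assumes "x = fps_X ^ 6 + fps_X ^ 7"
  shows "\<not> vals (ideal_sum (mpow 3) (principal x)) \<subseteq> vals (mpow 3 :: 'a fps set) \<union> vals (principal x)
    \<and> 22 \<in> vals (ideal_sum (mpow 3) (principal x))
    \<and> 22 \<notin> vals (mpow 3 :: 'a fps set) \<union> vals (principal x)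
    \<and> \<not> ess_divisible x
    \<and> ess_divisible (fps_X ^ 6 :: 'a fps)"
proof -
  have T21: "21 \<in> T 3" by (rule T_21)
  have X21: "(fps_X ^ 21 :: 'a fps) \<in> mpow 3" using X_mpow[OF T21] .
  have neg: "- (fps_X ^ 21 :: 'a fps) \<in> mpow 3"
  proof -
    have m7: "- (fps_X ^ 7 :: 'a fps) \<in> mideal"
      using X_m[OF Sgp_7, where 'a='a] unfolding mideal_def Rring_def by auto
    have "(14::nat) \<in> T 2" by (rule T_14)
    then have m14: "(fps_X ^ 14 :: 'a fps) \<in> mpow 2" by (rule X_mpow)
    have "- (fps_X ^ 7) * (fps_X ^ 14 :: 'a fps) \<in> mpow (Suc 2)"
      unfolding mpow.simps by (rule ideal_prod.prod[OF m7 m14])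
    moreover have "- (fps_X ^ 7) * (fps_X ^ 14 :: 'a fps) = - (fps_X ^ 21)"
      by (simp add: power_add[symmetric])
    ultimately show ?thesis by (simp add: numeral_3_eq_3)
  qed
  have px: "x * fps_X ^ 15 \<in> principal x"
    unfolding principal_def using X_R[OF Sgp_15] by auto
  have xe: "x * fps_X ^ 15 = fps_X ^ 21 + (fps_X ^ 22 :: 'a fps)"
    by (simp add: assms distrib_right power_add[symmetric])
  have A: "22 \<in> vals (ideal_sum (mpow 3) (principal x))"
  proof -
    have "- (fps_X ^ 21) + x * fps_X ^ 15 \<in> ideal_sum (mpow 3) (principal x)"
      unfolding ideal_sum_def using neg px by blast
    moreover have "- (fps_X ^ 21) + x * fps_X ^ 15 = (fps_X ^ 22 :: 'a fps)" by (simp add: xe)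
    ultimately show ?thesis unfolding vals_def
      by (intro CollectI exI[of _ "fps_X ^ 22 :: 'a fps"]) (simp add: fps_X_power_subdegree)
  qed
  have B1: "22 \<notin> vals (mpow 3 :: 'a fps set)"
  proof
    assume "22 \<in> vals (mpow 3 :: 'a fps set)"
    then obtain f :: "'a fps" where "f \<in> mpow 3" "f \<noteq> 0" "subdegree f = 22" unfolding vals_def by auto
    then have "22 \<in> T 3" using supp_mpow[of f 3 22] nth_subdegree_nonzero[of f] by simp
    then show False using T3_22 by simp
  qed
  have B2: "22 \<notin> vals (principal x)"
  proof
    assume "22 \<in> vals (principal x)"
    then obtain r :: "'a fps" where r: "r \<in> Rring" "x * r \<noteq> 0" "subdegree (x * r) = 22"
      unfolding vals_def principal_def by auto
    then have "r \<noteq> 0" by auto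
    then have "subdegree r = 16" using r sub_x[of r] assms by simp
    then have "16 \<in> Sgp" using sub_Sgp[OF r(1) \<open>r \<noteq> 0\<close>] by simp
    then show False using Sgp_16 by simp
  qed
  have C: "\<not> ess_divisible x"
  proof
    assume ed: "ess_divisible x"
    have s21: "subdegree (x * fps_X ^ 15) = 21"
      unfolding xe by (rule subdegreeI) auto
    have "fps_nth (x * fps_X ^ 15) 21 \<noteq> 0" unfolding xe by simp
    then have "x * fps_X ^ 15 \<noteq> 0" by auto
    note this s21
    then have "21 \<in> vals (principal x)" unfolding vals_def using px
      by (intro CollectI exI[of _ "x * fps_X ^ 15"]) simp
    then obtain a where a: "a \<in> principal x" "a \<noteq> 0" "subdegree a = 21"
      "ordm a = vordm TYPE('a) 21" using ed unfolding ess_divisible_def by blast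
    then obtain r where r: "r \<in> Rring" "a = x * r" unfolding principal_def by auto
    then have "r \<noteq> 0" using a by auto
    then have "subdegree r = 15" using r a sub_x[of r] assms by simp
    then have "fps_nth r 15 \<noteq> 0" using \<open>r \<noteq> 0\<close> nth_subdegree_nonzero[of r] by simp
    moreover have "fps_nth r 16 = 0" using r(1) Sgp_16 unfolding Rring_def by auto
    ultimately have a22: "fps_nth a 22 \<noteq> 0" using x_nth22[of r] r(2) assms by simp
    have notin: "i \<ge> 3 \<Longrightarrow> a \<notin> mpow i" for i
      using supp_mpow[OF _ a22] T_22 by blast
    have "x \<in> Rring" unfolding assms Rring_def using Sgp_6 Sgp_7 by auto
    then have "a \<in> mpow 0" using r Rring_mult by simp
    then have "a \<in> mpow (ordm a)" unfolding ordm_def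
    proof (rule GreatestI_nat[where b = 2])
      fix y assume "a \<in> mpow y"
      then have "\<not> 3 \<le> y" using notin[of y] by blast
      then show "y \<le> 2" by linarith
    qed
    then have o: "ordm a \<noteq> 3" using notin by auto
    have "vordm TYPE('a) 21 = 3" unfolding vordm_def
    proof (rule Greatest_equality)
      show "21 \<in> vals (mpow 3 :: 'a fps set)" unfolding vals_def using X21
        by (intro CollectI exI[of _ "fps_X ^ 21 :: 'a fps"]) (simp add: fps_X_power_subdegree)
    next
      fix y assume "21 \<in> vals (mpow y :: 'a fps set)"
      then obtain f :: "'a fps" where "f \<in> mpow y" "f \<noteq> 0" "subdegree f = 21" unfolding vals_def by auto
      then have "21 \<in> T y" using supp_mpow[of f y 21] nth_subdegree_nonzero[of f] by simp
      then show "y \<le> 3" using T_ge[of 21 y] by simp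
    qed
    then show False using o a(4) by simp
  qed
  have D: "ess_divisible (fps_X ^ 6 :: 'a fps)"
    unfolding ess_divisible_def
  proof
    fix u assume "u \<in> vals (principal (fps_X ^ 6 :: 'a fps))"
    then obtain r :: "'a fps" where r: "r \<in> Rring" "fps_X ^ 6 * r \<noteq> 0" "u = subdegree (fps_X ^ 6 * r)"
      unfolding vals_def principal_def by auto
    then have "r \<noteq> 0" by auto
    then have u: "u = 6 + subdegree r" using r(3) by (simp add: fps_X_power_subdegree)
    have "subdegree r \<in> Sgp" using sub_Sgp[OF r(1) \<open>r \<noteq> 0\<close>] .
    then have "fps_X ^ 6 * fps_X ^ subdegree r \<in> principal (fps_X ^ 6 :: 'a fps)"
      unfolding principal_def using X_R by blast
    then have inP: "fps_X ^ u \<in> principal (fps_X ^ 6 :: 'a fps)" by (simp add: u power_add)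
    have eq: "(fps_X ^ u \<in> (mpow i :: 'a fps set)) = (u \<in> vals (mpow i :: 'a fps set))" for i
    proof
      assume "fps_X ^ u \<in> (mpow i :: 'a fps set)"
      then show "u \<in> vals (mpow i :: 'a fps set)" unfolding vals_def
        by (intro CollectI exI[of _ "fps_X ^ u :: 'a fps"]) (simp add: fps_X_power_subdegree)
    next
      assume "u \<in> vals (mpow i :: 'a fps set)"
      then obtain f :: "'a fps" where "f \<in> mpow i" "f \<noteq> 0" "subdegree f = u" unfolding vals_def by auto
      then have "u \<in> T i" using supp_mpow[of f i u] nth_subdegree_nonzero[of f] by simp
      then show "fps_X ^ u \<in> (mpow i :: 'a fps set)" by (rule X_mpow)
    qed
    show "\<exists>a\<in>principal (fps_X ^ 6 :: 'a fps). a \<noteq> 0 \<and> subdegree a = u \<and> ordm a = vordm TYPE('a) u"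
      using inP by (intro bexI[of _ "fps_X ^ u :: 'a fps"]) (auto simp: fps_X_power_subdegree ordm_def vordm_def eq)
  qed
  show ?thesis using A B1 B2 C D by blast
qed

end
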